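(* Let $n\ge2$, let $P_1$ be the probability that a given node is isolated in $H^*_{nmF}$ and $P_2$ the probability that two given distinct nodes are both isolated in $H^*_{nmF}$. For each $k$ let $X_k$ be $f^{(k)}$-distributed and let $\phi_1(x)=1-\frac{x1(x\ge2)}{n}$. Assume $\mathbb{E}\phi_1(X_k)>0$ for all $k$. Then \[ \log\frac{P_2}{P_1^2}\ \le\ \sum_{k=1}^m\frac{\operatorname{Var}(\phi_1(X_k))}{(\mathbb{E}\phi_1(X_k))^2}. \]
   Context: Shotgun random hypergraph: given integers $n,m\ge1$ and probability distributions $f^{(1)},\dots,f^{(m)}$ on $\{0,\dots,n\}$, write $F=f^{(1)}\times\cdots\times f^{(m)}$. $H^*_{nmF}$ is the random hypergraph with node set $\{1,\dots,n\}$ and hyperedge set $\{V_1,\dots,V_m\}$, where $V_1,\dots,V_m\subset\{1,\dots,n\}$ are mutually independent and $\mathbb{P}(V_k=A)=f^{(k)}(|A|)\binom{n}{|A|}^{-1}$. A node is isolated if it is not contained in any hyperedge of size at least two. *)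

theory Defs
  imports Complex_Main "HOL-Library.FuncSet"
begin

text \<open>Shotgun random hypergraph H*_{nmF} on the node set {1..n}, as an explicit
finite probability space.  The distributions
f^(k) are given as f k :: nat \<Rightarrow> real (f k j = probability of size j).\<close>

definition configs :: "nat \<Rightarrow> nat \<Rightarrow> (nat \<Rightarrow> nat set) set" where
  "configs n m = PiE {1..m} (\<lambda>_. Pow {1..n})"

definition edge_prob :: "nat \<Rightarrow> (nat \<Rightarrow> real) \<Rightarrow> nat set \<Rightarrow> real" where
  "edge_prob n g A = g (card A) / real (n choose card A)"

text \<open>Probability of a configuration (hyperedges mutually independent).\<close>
definition config_prob :: "nat \<Rightarrow> nat \<Rightarrow> (nat \<Rightarrow> nat \<Rightarrow> real) \<Rightarrow> (nat \<Rightarrow> nat set) \<Rightarrow> real" where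
  "config_prob n m f Vs = (\<Prod>k\<in>{1..m}. edge_prob n (f k) (Vs k))"

definition isolated :: "nat \<Rightarrow> (nat \<Rightarrow> nat set) \<Rightarrow> nat \<Rightarrow> bool" where
  "isolated m Vs v \<longleftrightarrow> (\<forall>k\<in>{1..m}. v \<in> Vs k \<longrightarrow> card (Vs k) < 2)"

definition hg_prob :: "nat \<Rightarrow> nat \<Rightarrow> (nat \<Rightarrow> nat \<Rightarrow> real) \<Rightarrow> ((nat \<Rightarrow> nat set) \<Rightarrow> bool) \<Rightarrow> real" where
  "hg_prob n m f E = (\<Sum>Vs\<in>{Vs\<in>configs n m. E Vs}. config_prob n m f Vs)"

definition is_distr :: "nat \<Rightarrow> (nat \<Rightarrow> real) \<Rightarrow> bool" where
  "is_distr n g \<longleftrightarrow> (\<forall>j\<in>{0..n}. g j \<ge> 0) \<and> (\<Sum>j=0..n. g j) = 1"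

definition phi1 :: "nat \<Rightarrow> nat \<Rightarrow> real" where
  "phi1 n x = 1 - (if x \<ge> 2 then real x else 0) / real n"

definition expect :: "nat \<Rightarrow> (nat \<Rightarrow> real) \<Rightarrow> (nat \<Rightarrow> real) \<Rightarrow> real" where
  "expect n g h = (\<Sum>j=0..n. g j * h j)"

definition variance :: "nat \<Rightarrow> (nat \<Rightarrow> real) \<Rightarrow> (nat \<Rightarrow> real) \<Rightarrow> real" where
  "variance n g h = (\<Sum>j=0..n. g j * (h j - expect n g h)\<^sup>2)"

end

theory Submission
  imports Defs
begin

lemma hg_prod:
  "hg_prob n m f (\<lambda>Vs. \<forall>k\<in>{1..m}. Q (Vs k)) =
   (\<Prod>k\<in>{1..m}. \<Sum>A\<in>{A\<in>Pow {1..n}. Q A}. edge_prob n (f k) A)"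
proof -
  have "{Vs\<in>configs n m. \<forall>k\<in>{1..m}. Q (Vs k)} = PiE {1..m} (\<lambda>_. {A\<in>Pow {1..n}. Q A})"
    by (rule set_eqI) (simp add: configs_def PiE_iff, blast)
  then show ?thesis
    unfolding hg_prob_def config_prob_def
    by (simp add: prod_sum_PiE)
qed

lemma group_card:
  assumes "X \<subseteq> Pow {1..n}"
  shows "(\<Sum>A\<in>X. edge_prob n g A) =
    (\<Sum>j\<in>{0..n}. real (card {A\<in>X. card A = j}) * (g j / real (n choose j)))"
proof -
  have fin: "finite X" using assms by (meson finite_Pow_iff finite_atLeastAtMost finite_subset)
  have sub: "card ` X \<subseteq> {0..n}"
  proof
    fix y assume "y \<in> card ` X"
    then obtain A where "A \<in> X" "y = card A" by auto
    then have "A \<subseteq> {1..n}" using assms by auto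
    then have "card A \<le> card {1..n}" by (intro card_mono) auto
    then show "y \<in> {0..n}" using \<open>y = card A\<close> by simp
  qed
  have "(\<Sum>A\<in>X. edge_prob n g A) = (\<Sum>j\<in>{0..n}. \<Sum>A\<in>{A\<in>X. card A = j}. edge_prob n g A)"
    by (rule sum.group[symmetric, OF fin _ sub]) simp
  also have "\<dots> = (\<Sum>j\<in>{0..n}. real (card {A\<in>X. card A = j}) * (g j / real (n choose j)))"
  proof (rule sum.cong[OF refl])
    fix j assume "j \<in> {0..n}"
    have "(\<Sum>A\<in>{A\<in>X. card A = j}. edge_prob n g A) = (\<Sum>A\<in>{A\<in>X. card A = j}. g j / real (n choose j))"
      by (rule sum.cong) (auto simp: edge_prob_def)
    then show "(\<Sum>A\<in>{A\<in>X. card A = j}. edge_prob n g A) = real (card {A\<in>X. card A = j}) * (g j / real (n choose j))"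
      by simp
  qed
  finally show ?thesis .
qed

lemma ratio1:
  assumes "j \<le> n" "n \<ge> 1"
  shows "real ((n - 1) choose j) / real (n choose j) = 1 - real j / real n"
proof -
  have "(n - j) * (n choose j) = n * ((n - 1) choose j)" by (rule binomial_absorb_comp)
  then have "real (n - j) * real (n choose j) = real n * real ((n - 1) choose j)"
    by (metis of_nat_mult)
  moreover have "real (n choose j) > 0" using assms by simp
  moreover have "real (n - j) = real n - real j" using assms by simp
  ultimately show ?thesis using assms by (simp add: field_simps)
qed

lemma ratio2:
  assumes "j \<le> n" "n \<ge> 2"
  shows "real ((n - 2) choose j) / real (n choose j) \<le> (1 - real j / real n)^2"
proof (cases "j = n")
  case True
  then have "real ((n - 2) choose j) = 0" using assms by simp
  then show ?thesis by (metis div_0 zero_le_power2)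
next
  case False
  then have jl: "j \<le> n - 1" using assms by simp
  have e1: "real ((n - 1) choose j) / real (n choose j) = 1 - real j / real n"
    using ratio1 assms by simp
  have e2: "real ((n - 1 - 1) choose j) / real ((n - 1) choose j) = 1 - real j / real (n - 1)"
    using ratio1[OF jl] assms by simp
  have "n - 1 - 1 = n - 2" by simp
  have p1: "real ((n - 1) choose j) > 0" using jl by simp
  have p0: "real (n choose j) > 0" using assms by simp
  have "real ((n - 2) choose j) / real (n choose j) =
        (real ((n - 1 - 1) choose j) / real ((n - 1) choose j)) * (real ((n - 1) choose j) / real (n choose j))"
    using p1 p0 by (simp add: numeral_2_eq_2)
  also have "\<dots> = (1 - real j / real (n - 1)) * (1 - real j / real n)" using e1 e2 by simp
  also have "\<dots> \<le> (1 - real j / real n) * (1 - real j / real n)"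
  proof (rule mult_right_mono)
    have "real (n - 1) = real n - 1" using assms by simp
    moreover have "real j / real n \<le> real j / (real n - 1)"
      using assms by (intro divide_left_mono) auto
    ultimately show "1 - real j / real (n - 1) \<le> 1 - real j / real n" by simp
    show "0 \<le> 1 - real j / real n" using assms by (simp add: field_simps)
  qed
  finally show ?thesis by (simp add: power2_eq_square)
qed

lemma edge1:
  assumes "v \<in> {1..n}" "n \<ge> 2"
  shows "(\<Sum>A\<in>{A\<in>Pow {1..n}. v \<in> A \<longrightarrow> card A < 2}. edge_prob n g A) = expect n g (phi1 n)"
proof -
  have "(\<Sum>A\<in>{A\<in>Pow {1..n}. v \<in> A \<longrightarrow> card A < 2}. edge_prob n g A) =
    (\<Sum>j\<in>{0..n}. real (card {A\<in>{A\<in>Pow {1..n}. v \<in> A \<longrightarrow> card A < 2}. card A = j}) * (g j / real (n choose j)))"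
    by (rule group_card) auto
  also have "\<dots> = (\<Sum>j\<in>{0..n}. g j * phi1 n j)"
  proof (rule sum.cong[OF refl])
    fix j assume j: "j \<in> {0..n}"
    show "real (card {A\<in>{A\<in>Pow {1..n}. v \<in> A \<longrightarrow> card A < 2}. card A = j}) * (g j / real (n choose j)) = g j * phi1 n j"
    proof (cases "j < 2")
      case True
      have "{A\<in>{A\<in>Pow {1..n}. v \<in> A \<longrightarrow> card A < 2}. card A = j} = {B. B \<subseteq> {1..n} \<and> card B = j}"
        using True by auto
      then have "card {A\<in>{A\<in>Pow {1..n}. v \<in> A \<longrightarrow> card A < 2}. card A = j} = n choose j"
        using n_subsets[of "{1..n}" j] by simp
      moreover have "real (n choose j) > 0" using j by simp
      ultimately show ?thesis using True by (simp add: phi1_def)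
    next
      case False
      have "{A\<in>{A\<in>Pow {1..n}. v \<in> A \<longrightarrow> card A < 2}. card A = j} = {B. B \<subseteq> {1..n} - {v} \<and> card B = j}"
        using False by auto
      then have c: "card {A\<in>{A\<in>Pow {1..n}. v \<in> A \<longrightarrow> card A < 2}. card A = j} = (n - 1) choose j"
        using n_subsets[of "{1..n} - {v}" j] assms by simp
      moreover have r: "real ((n - 1) choose j) / real (n choose j) = 1 - real j / real n"
        using ratio1 j assms by simp
      ultimately have "real (card {A\<in>{A\<in>Pow {1..n}. v \<in> A \<longrightarrow> card A < 2}. card A = j}) * (g j / real (n choose j))
         = g j * (real ((n - 1) choose j) / real (n choose j))" unfolding c by (simp add: field_simps)
      also have "\<dots> = g j * phi1 n j" unfolding r using False by (simp add: phi1_def)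
      finally show ?thesis .
    qed
  qed
  finally show ?thesis by (simp add: expect_def)
qed

lemma edge2:
  assumes "u \<in> {1..n}" "w \<in> {1..n}" "u \<noteq> w" "n \<ge> 2" "\<forall>j\<in>{0..n}. g j \<ge> 0"
  shows "(\<Sum>A\<in>{A\<in>Pow {1..n}. (u \<in> A \<longrightarrow> card A < 2) \<and> (w \<in> A \<longrightarrow> card A < 2)}. edge_prob n g A)
     \<le> expect n g (\<lambda>j. (phi1 n j)^2)"
proof -
  let ?X = "{A\<in>Pow {1..n}. (u \<in> A \<longrightarrow> card A < 2) \<and> (w \<in> A \<longrightarrow> card A < 2)}"
  have "(\<Sum>A\<in>?X. edge_prob n g A) =
    (\<Sum>j\<in>{0..n}. real (card {A\<in>?X. card A = j}) * (g j / real (n choose j)))"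
    by (rule group_card) auto
  also have "\<dots> \<le> (\<Sum>j\<in>{0..n}. g j * (phi1 n j)^2)"
  proof (rule sum_mono)
    fix j assume j: "j \<in> {0..n}"
    show "real (card {A\<in>?X. card A = j}) * (g j / real (n choose j)) \<le> g j * (phi1 n j)^2"
    proof (cases "j < 2")
      case True
      have "{A\<in>?X. card A = j} = {B. B \<subseteq> {1..n} \<and> card B = j}"
        using True by auto
      then have "card {A\<in>?X. card A = j} = n choose j"
        using n_subsets[of "{1..n}" j] by simp
      moreover have "real (n choose j) > 0" using j by simp
      ultimately show ?thesis using True by (simp add: phi1_def)
    next
      case False
      have "{A\<in>?X. card A = j} = {B. B \<subseteq> {1..n} - {u, w} \<and> card B = j}"
        using False by auto
      moreover have "card ({1..n} - {u, w}) = n - 2" using assms by (simp add: card_Diff_subset)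
      ultimately have c: "card {A\<in>?X. card A = j} = (n - 2) choose j"
        using n_subsets[of "{1..n} - {u, w}" j] by simp
      moreover have r: "real ((n - 2) choose j) / real (n choose j) \<le> (1 - real j / real n)^2"
        using ratio2 j assms by simp
      moreover have g: "g j \<ge> 0" using assms j by simp
      ultimately have "real (card {A\<in>?X. card A = j}) * (g j / real (n choose j))
         = g j * (real ((n - 2) choose j) / real (n choose j))" unfolding c by (simp add: field_simps)
      also have "\<dots> \<le> g j * (1 - real j / real n)^2" by (rule mult_left_mono[OF r g])
      also have "\<dots> = g j * (phi1 n j)^2" using False by (simp add: phi1_def)
      finally show ?thesis .
    qed
  qed
  finally show ?thesis by (simp add: expect_def)
qed

theorem mainTheorem11:
  fixes n m :: nat and f :: "nat \<Rightarrow> nat \<Rightarrow> real" and v u w :: nat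
  assumes "n \<ge> 2" and "m \<ge> 1"
    and "\<forall>k\<in>{1..m}. is_distr n (f k)"
    and "\<forall>k\<in>{1..m}. expect n (f k) (phi1 n) > 0"
    and "v \<in> {1..n}" and "u \<in> {1..n}" and "w \<in> {1..n}" and "u \<noteq> w"
  shows "ln (hg_prob n m f (\<lambda>Vs. isolated m Vs u \<and> isolated m Vs w)
             / (hg_prob n m f (\<lambda>Vs. isolated m Vs v))\<^sup>2)
         \<le> (\<Sum>k=1..m. variance n (f k) (phi1 n) / (expect n (f k) (phi1 n))\<^sup>2)"
proof -
  let ?I = "{1..m}"
  define a where "a k = expect n (f k) (phi1 n)" for k
  define c where "c k = expect n (f k) (\<lambda>j. (phi1 n j)^2)" for k
  define b where "b k = (\<Sum>A\<in>{A\<in>Pow {1..n}. (u \<in> A \<longrightarrow> card A < 2) \<and> (w \<in> A \<longrightarrow> card A < 2)}. edge_prob n (f k) A)" for k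
  have ge0: "\<forall>j\<in>{0..n}. f k j \<ge> 0" and s1: "(\<Sum>j=0..n. f k j) = 1" if "k \<in> ?I" for k
    using assms(3) that by (auto simp: is_distr_def)
  have apos: "a k > 0" if "k \<in> ?I" for k using assms(4) that by (simp add: a_def)
  have P1: "hg_prob n m f (\<lambda>Vs. isolated m Vs v) = (\<Prod>k\<in>?I. a k)"
  proof -
    have "hg_prob n m f (\<lambda>Vs. isolated m Vs v) =
      (\<Prod>k\<in>?I. \<Sum>A\<in>{A\<in>Pow {1..n}. v \<in> A \<longrightarrow> card A < 2}. edge_prob n (f k) A)"
      unfolding isolated_def using hg_prod[of n m f "\<lambda>A. v \<in> A \<longrightarrow> card A < 2"] by simp
    also have "\<dots> = (\<Prod>k\<in>?I. a k)"
      by (rule prod.cong[OF refl]) (unfold a_def, rule edge1[OF assms(5,1)])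
    finally show ?thesis .
  qed
  have P2: "hg_prob n m f (\<lambda>Vs. isolated m Vs u \<and> isolated m Vs w) = (\<Prod>k\<in>?I. b k)"
  proof -
    have e: "(\<lambda>Vs. isolated m Vs u \<and> isolated m Vs w) =
       (\<lambda>Vs. \<forall>k\<in>?I. (\<lambda>A. (u \<in> A \<longrightarrow> card A < 2) \<and> (w \<in> A \<longrightarrow> card A < 2)) (Vs k))"
      unfolding isolated_def by auto
    show ?thesis unfolding e b_def using hg_prod[of n m f "\<lambda>A. (u \<in> A \<longrightarrow> card A < 2) \<and> (w \<in> A \<longrightarrow> card A < 2)"] by simp
  qed
  have bc: "b k \<le> c k" if "k \<in> ?I" for k
    unfolding b_def c_def using edge2[OF assms(6,7,8,1) ge0[OF that]] .
  have b0: "b k \<ge> 0" if "k \<in> ?I" for k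
    unfolding b_def
  proof (rule sum_nonneg)
    fix A assume "A \<in> {A\<in>Pow {1..n}. (u \<in> A \<longrightarrow> card A < 2) \<and> (w \<in> A \<longrightarrow> card A < 2)}"
    then have "A \<subseteq> {1..n}" by auto
    then have "card A \<le> card {1..n}" by (intro card_mono) auto
    then have "f k (card A) \<ge> 0" using ge0[OF that] by simp
    then show "edge_prob n (f k) A \<ge> 0" by (simp add: edge_prob_def)
  qed
  have var: "variance n (f k) (phi1 n) = c k - (a k)^2" if "k \<in> ?I" for k
  proof -
    have "variance n (f k) (phi1 n) = (\<Sum>j=0..n. f k j * (phi1 n j)^2 - 2 * a k * (f k j * phi1 n j) + (a k)^2 * f k j)"
      unfolding variance_def a_def[symmetric]
      by (rule sum.cong[OF refl]) (simp add: power2_eq_square algebra_simps)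
    also have "\<dots> = c k - 2 * a k * a k + (a k)^2 * 1"
      by (simp add: sum.distrib sum_subtractf sum_distrib_left[symmetric] s1[OF that] c_def a_def expect_def)
    finally show ?thesis by (simp add: power2_eq_square)
  qed
  have varnn: "variance n (f k) (phi1 n) \<ge> 0" if "k \<in> ?I" for k
    unfolding variance_def using ge0[OF that] by (intro sum_nonneg) simp
  show ?thesis
  proof (cases "\<forall>k\<in>?I. b k > 0")
    case True
    have "(\<Prod>k\<in>?I. b k) / (\<Prod>k\<in>?I. a k)^2 = (\<Prod>k\<in>?I. b k / (a k)^2)"
      by (simp add: prod_dividef prod_power_distrib)
    moreover have "ln (\<Prod>k\<in>?I. b k / (a k)^2) = (\<Sum>k\<in>?I. ln (b k / (a k)^2))"
    proof (rule ln_prod)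
      fix k assume k: "k \<in> ?I"
      then have "b k > 0" "a k > 0" using True apos by auto
      then show "b k / (a k)^2 \<noteq> 0" by simp
    qed simp
    ultimately have "ln ((\<Prod>k\<in>?I. b k) / (\<Prod>k\<in>?I. a k)^2) = (\<Sum>k\<in>?I. ln (b k / (a k)^2))"
      by simp
    also have "\<dots> \<le> (\<Sum>k\<in>?I. variance n (f k) (phi1 n) / (expect n (f k) (phi1 n))\<^sup>2)"
    proof (rule sum_mono)
      fix k assume k: "k \<in> ?I"
      have "ln (b k / (a k)^2) \<le> b k / (a k)^2 - 1"
        using True k apos[OF k] by (intro ln_le_minus_one) simp
      also have "\<dots> \<le> c k / (a k)^2 - 1"
        using bc[OF k] apos[OF k] by (simp add: divide_right_mono)
      also have "\<dots> = variance n (f k) (phi1 n) / (expect n (f k) (phi1 n))\<^sup>2"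
        using var[OF k] apos[OF k] by (simp add: a_def[symmetric] field_simps)
      finally show "ln (b k / (a k)^2) \<le> variance n (f k) (phi1 n) / (expect n (f k) (phi1 n))\<^sup>2" .
    qed
    finally show ?thesis unfolding P1 P2 by simp
  next
    case False
    then obtain k where "k \<in> ?I" "b k = 0" using b0 by force
    then have z: "(\<Prod>k\<in>?I. b k) = 0" by (intro prod_zero) auto
    have R: "(\<Sum>k=1..m. variance n (f k) (phi1 n) / (expect n (f k) (phi1 n))\<^sup>2) \<ge> 0"
      using varnn by (intro sum_nonneg) simp
    have L: "ln ((\<Prod>k\<in>?I. b k) / (\<Prod>k\<in>?I. a k)^2) = 0" by (simp only: z div_0 ln_0)
    show ?thesis unfolding P1 P2 L by (rule R)
  qed
qed

end
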